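(* Consider the setting and certainty-equivalent controller described in the context. The estimation mismatch $\tilde{e}_k=\check{x}_k-\hat{x}_k$, where $\check{x}_k=\mathbb{E}[x_k\mid\mathcal{I}^e_k]$, satisfies $\tilde{e}_0=x_0-m_0$ and, for $k\in\mathcal{K}$, $$\tilde{e}_{k+1}=(1-\delta_k)A\tilde{e}_k+\sum_{t=\zeta_{k+1}}^{\zeta_k}A^tw_{k-t}.$$
   Context: Let $n,m\ge 1$, $N\in\mathbb{N}$, $\mathcal{K}=\{0,1,\dots,N\}$. A process evolves as $x_{k+1}=Ax_k+Bu_k+w_k$ with output $y_k=x_{k-\tau_k}$, where $A\in\mathbb{R}^{n\times n}$, $B\in\mathbb{R}^{n\times m}$, $w_k$ is Gaussian white noise with zero mean and covariance $W\succ0$, $x_0$ is Gaussian with mean $m_0$ and covariance $M_0$, $\tau_k\in\mathbb{N}_0$ are random delays with known distribution and $\tau_0=0$, all mutually independent. An event trigger chooses $\delta_k\in\{0,1\}$ (transmission to the controller, received at time $k+1$). Ages of information: at the event trigger $\zeta_0=0$, $\zeta_k=\tau_k$ if $\tau_k<\zeta_{k-1}+1$ and $\zeta_k=\zeta_{k-1}+1$ otherwise; at the controller $\eta_0=\infty$, $\eta_k=\zeta_{k-1}+1$ if $\delta_{k-1}=1$ and $\eta_k=\eta_{k-1}+1$ otherwise. The event trigger's information set is $\mathcal{I}^e_k=\{x_{t-\zeta_t},x_{t-\eta_t},\delta_s,u_s : 0\le t\le k,\ 0\le s<k\}$ (infinite-age entries void). Let $Q\succeq0$, $R\succ0$, $S_{N+1}=Q$,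 $S_k=Q+A^TS_{k+1}A-A^TS_{k+1}B(B^TS_{k+1}B+R)^{-1}B^TS_{k+1}A$, $L_k=(B^TS_{k+1}B+R)^{-1}B^TS_{k+1}A$. The controller applies $u_k=-L_k\hat{x}_k$, where $\hat{x}_0=m_0$ and $\hat{x}_{k+1}=A^{\zeta_k+1}x_{k-\zeta_k}+\sum_{t=0}^{\zeta_k}A^tBu_{k-t}$ if $\delta_k=1$, and $\hat{x}_{k+1}=A\hat{x}_k+Bu_k$ if $\delta_k=0$. A sum whose lower index exceeds its upper index is zero. *)

theory Defs
  imports "HOL-Probability.Probability"
begin

definition matpow :: "real^'n^'n \<Rightarrow> nat \<Rightarrow> real^'n^'n" where
  "matpow A t = ((\<lambda>X. A ** X) ^^ t) (mat 1)"

definition psd_mat :: "real^'n^'n \<Rightarrow> bool" where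
  "psd_mat C \<longleftrightarrow> transpose C = C \<and> (\<forall>v. 0 \<le> v \<bullet> (C *v v))"

definition pd_mat :: "real^'n^'n \<Rightarrow> bool" where
  "pd_mat C \<longleftrightarrow> transpose C = C \<and> (\<forall>v. v \<noteq> 0 \<longrightarrow> 0 < v \<bullet> (C *v v))"

text \<open>riccati_rev j = S_{N+1-j}; so riccati_rev 0 = S_{N+1} = Q.\<close>
fun riccati_rev :: "real^'n^'n \<Rightarrow> real^'m^'n \<Rightarrow> real^'n^'n \<Rightarrow> real^'m^'m \<Rightarrow> nat \<Rightarrow> real^'n^'n" where
  "riccati_rev A B Q R 0 = Q"
| "riccati_rev A B Q R (Suc j) =
     (let S = riccati_rev A B Q R j in
        Q + transpose A ** S ** A
          - transpose A ** S ** B ** matrix_inv (transpose B ** S ** B + R) ** transpose B ** S ** A)"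

definition riccati_S :: "real^'n^'n \<Rightarrow> real^'m^'n \<Rightarrow> real^'n^'n \<Rightarrow> real^'m^'m \<Rightarrow> nat \<Rightarrow> nat \<Rightarrow> real^'n^'n" where
  "riccati_S A B Q R N k = riccati_rev A B Q R (N + 1 - k)"

definition lqr_gain :: "real^'n^'n \<Rightarrow> real^'m^'n \<Rightarrow> real^'n^'n \<Rightarrow> real^'m^'m \<Rightarrow> nat \<Rightarrow> nat \<Rightarrow> real^'n^'m" where
  "lqr_gain A B Q R N k =
     (let S = riccati_S A B Q R N (k + 1) in
        matrix_inv (transpose B ** S ** B + R) ** transpose B ** S ** A)"

text \<open>Age at the event trigger: zeta_0 = 0, zeta_k = tau_k if tau_k < zeta_{k-1}+1, else zeta_{k-1}+1.\<close>
fun zeta :: "(nat \<Rightarrow> 'w \<Rightarrow> nat) \<Rightarrow> nat \<Rightarrow> 'w \<Rightarrow> nat" where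
  "zeta tau 0 \<omega> = 0"
| "zeta tau (Suc k) \<omega> =
     (if tau (Suc k) \<omega> < zeta tau k \<omega> + 1 then tau (Suc k) \<omega> else zeta tau k \<omega> + 1)"

text \<open>Age at the controller: eta_0 = infinity, eta_{k+1} = zeta_k + 1 if delta_k = 1, else eta_k + 1.
  The transmission decision delta_k is boolean (True = 1, False = 0).\<close>
fun eta :: "(nat \<Rightarrow> 'w \<Rightarrow> nat) \<Rightarrow> (nat \<Rightarrow> 'w \<Rightarrow> bool) \<Rightarrow> nat \<Rightarrow> 'w \<Rightarrow> enat" where
  "eta tau delta 0 \<omega> = \<infinity>"
| "eta tau delta (Suc k) \<omega> =
     (if delta k \<omega> then enat (zeta tau k \<omega> + 1) else eta tau delta k \<omega> + 1)"

text \<open>cl_hist ... k w j = (x_j, xhat_j) for j \<le> k, built by forward recursion; L is the gain sequence.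
  u_j = - L_j xhat_j.\<close>
fun cl_hist :: "real^'n^'n \<Rightarrow> real^'m^'n \<Rightarrow> (nat \<Rightarrow> real^'n^'m) \<Rightarrow> real^'n
    \<Rightarrow> ('w \<Rightarrow> real^'n) \<Rightarrow> (nat \<Rightarrow> 'w \<Rightarrow> real^'n) \<Rightarrow> (nat \<Rightarrow> 'w \<Rightarrow> nat) \<Rightarrow> (nat \<Rightarrow> 'w \<Rightarrow> bool)
    \<Rightarrow> nat \<Rightarrow> 'w \<Rightarrow> (nat \<Rightarrow> (real^'n) \<times> (real^'n))" where
  "cl_hist A B L m0 x0 w tau delta 0 \<omega> = (\<lambda>_. (x0 \<omega>, m0))"
| "cl_hist A B L m0 x0 w tau delta (Suc k) \<omega> =
     (let h = cl_hist A B L m0 x0 w tau delta k \<omega>;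
          x = (\<lambda>j. fst (h j));
          xh = (\<lambda>j. snd (h j));
          u = (\<lambda>j. - (L j *v xh j));
          z = zeta tau k \<omega>;
          xn = A *v x k + B *v u k + w k \<omega>;
          xhn = (if delta k \<omega>
                 then matpow A (z + 1) *v x (k - z) + (\<Sum>t = 0..z. matpow A t *v (B *v u (k - t)))
                 else A *v xh k + B *v u k)
      in h(Suc k := (xn, xhn)))"

definition cl_state where
  "cl_state A B L m0 x0 w tau delta k \<omega> = fst (cl_hist A B L m0 x0 w tau delta k \<omega> k)"

definition cl_est where
  "cl_est A B L m0 x0 w tau delta k \<omega> = snd (cl_hist A B L m0 x0 w tau delta k \<omega> k)"

definition cl_input where
  "cl_input A B L m0 x0 w tau delta k \<omega> = - (L k *v cl_est A B L m0 x0 w tau delta k \<omega>)"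

definition gen_events :: "'w measure \<Rightarrow> 'b measure \<Rightarrow> ('w \<Rightarrow> 'b) \<Rightarrow> 'w set set" where
  "gen_events M N f = {f -` S \<inter> space M | S. S \<in> sets N}"

text \<open>sigma-algebra generated by I^e_k = {x_{t-zeta_t}, x_{t-eta_t}, delta_s, u_s : t \<le> k, s < k},
  where the ages (time stamps) zeta_t, eta_t are part of the information, and a void entry
  (eta_t = infinity) is represented by the value 0 (its voidness is known through eta_t).\<close>
definition trigger_info ::
  "'w measure \<Rightarrow> (nat \<Rightarrow> 'w \<Rightarrow> real^'n) \<Rightarrow> (nat \<Rightarrow> 'w \<Rightarrow> real^'m) \<Rightarrow> (nat \<Rightarrow> 'w \<Rightarrow> nat)
     \<Rightarrow> (nat \<Rightarrow> 'w \<Rightarrow> bool) \<Rightarrow> nat \<Rightarrow> 'w measure" where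
  "trigger_info M x u tau delta k = sigma (space M)
     ((\<Union>t\<in>{..k}. gen_events M borel (\<lambda>\<omega>. x (t - zeta tau t \<omega>) \<omega>))
    \<union> (\<Union>t\<in>{..k}. gen_events M (count_space UNIV) (zeta tau t))
    \<union> (\<Union>t\<in>{..k}. gen_events M borel
          (\<lambda>\<omega>. case eta tau delta t \<omega> of enat j \<Rightarrow> x (t - j) \<omega> | \<infinity> \<Rightarrow> 0))
    \<union> (\<Union>t\<in>{..k}. gen_events M (count_space UNIV) (eta tau delta t))
    \<union> (\<Union>s\<in>{..<k}. gen_events M (count_space UNIV) (delta s))
    \<union> (\<Union>s\<in>{..<k}. gen_events M borel (u s)))"

definition cond_exp_vec :: "'w measure \<Rightarrow> 'w measure \<Rightarrow> ('w \<Rightarrow> real^'n) \<Rightarrow> 'w \<Rightarrow> real^'n" where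
  "cond_exp_vec M F X \<omega> = (\<chi> i. real_cond_exp M F (\<lambda>\<eta>. X \<eta> $ i) \<omega>)"

text \<open>X is Gaussian with mean m and covariance C: every projection a.X is N(a.m, a^T C a)
  (degenerate = almost surely constant when a^T C a = 0).\<close>
definition gaussian_vec :: "'w measure \<Rightarrow> ('w \<Rightarrow> real^'n) \<Rightarrow> real^'n \<Rightarrow> real^'n^'n \<Rightarrow> bool" where
  "gaussian_vec M X m C \<longleftrightarrow> X \<in> borel_measurable M \<and>
     (\<forall>a. (a \<bullet> (C *v a) = 0 \<longrightarrow> (AE \<omega> in M. a \<bullet> X \<omega> = a \<bullet> m)) \<and>
          (0 < a \<bullet> (C *v a) \<longrightarrow>
             distributed M lborel (\<lambda>\<omega>. a \<bullet> X \<omega>) (normal_density (a \<bullet> m) (sqrt (a \<bullet> (C *v a))))))"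

datatype prim_idx = PX0 | PW nat | PTau nat

definition prim_events :: "'w measure \<Rightarrow> ('w \<Rightarrow> real^'n) \<Rightarrow> (nat \<Rightarrow> 'w \<Rightarrow> real^'n)
    \<Rightarrow> (nat \<Rightarrow> 'w \<Rightarrow> nat) \<Rightarrow> prim_idx \<Rightarrow> 'w set set" where
  "prim_events M x0 w tau i = (case i of
      PX0 \<Rightarrow> gen_events M borel x0
    | PW k \<Rightarrow> gen_events M borel (w k)
    | PTau k \<Rightarrow> gen_events M (count_space UNIV) (tau k))"

end

theory Submission
  imports Defs
begin


lemma mv_sum: "M *v sum f S = (\<Sum>i\<in>S. M *v f i)"
  by (induction S rule: infinite_finite_induct) (auto simp: matrix_vector_right_distrib)

locale clp =
  fixes A :: "real^'n^'n" and B :: "real^'m^'n" and L :: "nat \<Rightarrow> real^'n^'m"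
    and m0 :: "real^'n" and x0 :: "'w \<Rightarrow> real^'n" and w :: "nat \<Rightarrow> 'w \<Rightarrow> real^'n"
    and tau :: "nat \<Rightarrow> 'w \<Rightarrow> nat" and delta :: "nat \<Rightarrow> 'w \<Rightarrow> bool"
begin

abbreviation "hh \<equiv> cl_hist A B L m0 x0 w tau delta"
abbreviation "X \<equiv> cl_state A B L m0 x0 w tau delta"
abbreviation "Xh \<equiv> cl_est A B L m0 x0 w tau delta"
abbreviation "U \<equiv> cl_input A B L m0 x0 w tau delta"
abbreviation "z \<equiv> zeta tau"
definition "T k \<omega> = k - zeta tau k \<omega>"

lemma hist_stable: "j \<le> k \<Longrightarrow> hh k \<omega> j = hh j \<omega> j"
proof (induction k)
  case 0 then show ?case by simp
next
  case (Suc k)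
  show ?case
  proof (cases "j = Suc k")
    case False
    then have "j \<le> k" using Suc.prems by simp
    then show ?thesis using False Suc.IH by (simp add: Let_def)
  qed simp
qed

lemma X0: "X 0 \<omega> = x0 \<omega>" and Xh0: "Xh 0 \<omega> = m0"
  by (simp_all add: cl_state_def cl_est_def)

lemma hist_fst: "j \<le> k \<Longrightarrow> fst (hh k \<omega> j) = X j \<omega>"
  by (simp only: hist_stable[of j k] cl_state_def)
lemma hist_snd: "j \<le> k \<Longrightarrow> snd (hh k \<omega> j) = Xh j \<omega>"
  by (simp only: hist_stable[of j k] cl_est_def)

lemma U_def': "U j \<omega> = - (L j *v Xh j \<omega>)"
  by (simp add: cl_input_def)

lemma zeta_le: "z k \<omega> \<le> k"
proof (induction k)
  case (Suc k)
  then show ?case by (simp only: zeta.simps split: if_split) linarith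
qed simp

lemma X_Suc: "X (Suc k) \<omega> = A *v X k \<omega> + B *v U k \<omega> + w k \<omega>"
proof -
  have "X (Suc k) \<omega> = fst (hh (Suc k) \<omega> (Suc k))" by (simp only: cl_state_def)
  also have "\<dots> = A *v fst (hh k \<omega> k) + B *v (- (L k *v snd (hh k \<omega> k))) + w k \<omega>"
    by (simp only: cl_hist.simps Let_def fun_upd_same fst_conv)
  also have "\<dots> = A *v X k \<omega> + B *v U k \<omega> + w k \<omega>"
    by (simp only: hist_fst[of k k] hist_snd[of k k] U_def' order_refl)
  finally show ?thesis .
qed

lemma Xh_Suc: "Xh (Suc k) \<omega> = (if delta k \<omega>
     then matpow A (z k \<omega> + 1) *v X (k - z k \<omega>) \<omega> + (\<Sum>t = 0..z k \<omega>. matpow A t *v (B *v U (k - t) \<omega>))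
     else A *v Xh k \<omega> + B *v U k \<omega>)"
proof -
  have "Xh (Suc k) \<omega> = snd (hh (Suc k) \<omega> (Suc k))" by (simp only: cl_est_def)
  also have "\<dots> = (if delta k \<omega>
     then matpow A (z k \<omega> + 1) *v fst (hh k \<omega> (k - z k \<omega>)) + (\<Sum>t = 0..z k \<omega>. matpow A t *v (B *v (- (L (k-t) *v snd (hh k \<omega> (k - t))))))
     else A *v snd (hh k \<omega> k) + B *v (- (L k *v snd (hh k \<omega> k))))"
    by (simp only: cl_hist.simps Let_def fun_upd_same snd_conv)
  also have "\<dots> = (if delta k \<omega>
     then matpow A (z k \<omega> + 1) *v X (k - z k \<omega>) \<omega> + (\<Sum>t = 0..z k \<omega>. matpow A t *v (B *v U (k - t) \<omega>))
     else A *v Xh k \<omega> + B *v U k \<omega>)"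
  proof -
    have s: "(\<Sum>t = 0..z k \<omega>. matpow A t *v (B *v (- (L (k-t) *v snd (hh k \<omega> (k - t)))))) =
      (\<Sum>t = 0..z k \<omega>. matpow A t *v (B *v U (k - t) \<omega>))"
      by (rule sum.cong) (simp_all add: hist_snd U_def')
    have f: "fst (hh k \<omega> (k - z k \<omega>)) = X (k - z k \<omega>) \<omega>" by (simp add: hist_fst)
    have g: "snd (hh k \<omega> k) = Xh k \<omega>" by (simp add: hist_snd)
    show ?thesis by (simp only: s f g U_def')
  qed
  finally show ?thesis .
qed


definition "xc k \<omega> = matpow A (k - T k \<omega>) *v X (T k \<omega>) \<omega> + (\<Sum>j\<in>{T k \<omega>..<k}. matpow A (k - 1 - j) *v (B *v U j \<omega>))"
definition "nz k \<omega> = (\<Sum>j\<in>{T k \<omega>..<k}. matpow A (k - 1 - j) *v w j \<omega>)"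

lemma T_le: "T k \<omega> \<le> k" by (simp add: T_def)
lemma T_mono1: "T k \<omega> \<le> T (Suc k) \<omega>"
  using zeta_le[of k \<omega>] by (simp add: T_def; arith)
lemma T_mono: "s \<le> k \<Longrightarrow> T s \<omega> \<le> T k \<omega>"
proof (induction k)
  case (Suc k) then show ?case using T_mono1[of k \<omega>] by (cases "s = Suc k") auto
qed simp

lemma unroll: "m \<le> k \<Longrightarrow> X k \<omega> = matpow A (k - m) *v X m \<omega> + (\<Sum>j\<in>{m..<k}. matpow A (k - 1 - j) *v (B *v U j \<omega> + w j \<omega>))"
proof (induction k)
  case 0 then show ?case by (simp add: matpow_def)
next
  case (Suc k)
  show ?case
  proof (cases "m = Suc k")
    case True then show ?thesis by (simp add: matpow_def)
  next
    case False
    then have mk: "m \<le> k" using Suc.prems by simp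
    have e: "Suc k - m = Suc (k - m)" using mk by simp
    have "X (Suc k) \<omega> = A *v X k \<omega> + B *v U k \<omega> + w k \<omega>" by (rule X_Suc)
    also have "\<dots> = A *v (matpow A (k - m) *v X m \<omega>) + (\<Sum>j\<in>{m..<k}. A *v (matpow A (k - 1 - j) *v (B *v U j \<omega> + w j \<omega>)))
        + (B *v U k \<omega> + w k \<omega>)"
      using Suc.IH[OF mk] by (simp add: mv_sum matrix_vector_right_distrib algebra_simps)
    also have "\<dots> = matpow A (Suc k - m) *v X m \<omega> + (\<Sum>j\<in>{m..<Suc k}. matpow A (Suc k - 1 - j) *v (B *v U j \<omega> + w j \<omega>))"
    proof -
      have "(\<Sum>j\<in>{m..<k}. A *v (matpow A (k - 1 - j) *v (B *v U j \<omega> + w j \<omega>)))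
          = (\<Sum>j\<in>{m..<k}. matpow A (Suc k - 1 - j) *v (B *v U j \<omega> + w j \<omega>))"
      proof (rule sum.cong)
        fix j assume "j \<in> {m..<k}"
        then have "Suc k - 1 - j = Suc (k - 1 - j)" by auto
        then show "A *v (matpow A (k - 1 - j) *v (B *v U j \<omega> + w j \<omega>)) = matpow A (Suc k - 1 - j) *v (B *v U j \<omega> + w j \<omega>)"
          by (simp add: matpow_def matrix_vector_mul_assoc)
      qed simp
      moreover have "A *v (matpow A (k - m) *v X m \<omega>) = matpow A (Suc k - m) *v X m \<omega>"
        using e by (simp add: matpow_def matrix_vector_mul_assoc)
      moreover have "(\<Sum>j\<in>{m..<Suc k}. matpow A (Suc k - 1 - j) *v (B *v U j \<omega> + w j \<omega>))
         = (\<Sum>j\<in>{m..<k}. matpow A (Suc k - 1 - j) *v (B *v U j \<omega> + w j \<omega>)) + (B *v U k \<omega> + w k \<omega>)"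
        using mk by (simp add: matpow_def)
      ultimately show ?thesis by simp
    qed
    finally show ?thesis .
  qed
qed

lemma X_split: "X k \<omega> = xc k \<omega> + nz k \<omega>"
  using unroll[OF T_le[of k \<omega>]]
  by (simp add: xc_def nz_def matrix_vector_right_distrib sum.distrib algebra_simps)

lemma xc0: "xc 0 \<omega> = x0 \<omega>"
  by (simp add: xc_def T_def X0 matpow_def)

lemma wsum_step: "A *v nz k \<omega> + w k \<omega> = (\<Sum>j\<in>{T k \<omega>..<Suc k}. matpow A (k - j) *v w j \<omega>)"
proof -
  have "A *v nz k \<omega> = (\<Sum>j\<in>{T k \<omega>..<k}. matpow A (k - j) *v w j \<omega>)"
    unfolding nz_def mv_sum
  proof (rule sum.cong)
    fix j assume "j \<in> {T k \<omega>..<k}"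
    then have "k - j = Suc (k - 1 - j)" by auto
    then show "A *v (matpow A (k - 1 - j) *v w j \<omega>) = matpow A (k - j) *v w j \<omega>"
      by (simp add: matpow_def matrix_vector_mul_assoc)
  qed simp
  then show ?thesis using T_le[of k \<omega>] by (simp add: matpow_def)
qed

lemma wsum_diff: "(\<Sum>j\<in>{T k \<omega>..<Suc k}. matpow A (k - j) *v w j \<omega>) - nz (Suc k) \<omega>
   = (\<Sum>t \<in> {z (Suc k) \<omega>..z k \<omega>}. matpow A t *v w (k - t) \<omega>)"
proof -
  have le1: "T k \<omega> \<le> T (Suc k) \<omega>" by (rule T_mono1)
  have le2: "T (Suc k) \<omega> \<le> Suc k" by (rule T_le)
  have "(\<Sum>j\<in>{T k \<omega>..<Suc k}. matpow A (k - j) *v w j \<omega>) =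
     (\<Sum>j\<in>{T k \<omega>..<T (Suc k) \<omega>}. matpow A (k - j) *v w j \<omega>) + (\<Sum>j\<in>{T (Suc k) \<omega>..<Suc k}. matpow A (k - j) *v w j \<omega>)"
    using le1 le2 by (rule sum.atLeastLessThan_concat[symmetric])
  moreover have "nz (Suc k) \<omega> = (\<Sum>j\<in>{T (Suc k) \<omega>..<Suc k}. matpow A (k - j) *v w j \<omega>)"
    by (simp add: nz_def)
  moreover have "(\<Sum>j\<in>{T k \<omega>..<T (Suc k) \<omega>}. matpow A (k - j) *v w j \<omega>) = (\<Sum>t \<in> {z (Suc k) \<omega>..z k \<omega>}. matpow A t *v w (k - t) \<omega>)"
  proof (rule sum.reindex_bij_witness[where i="\<lambda>t. k - t" and j="\<lambda>j. k - j"])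
    fix a assume "a \<in> {T k \<omega>..<T (Suc k) \<omega>}"
    then show "k - (k - a) = a" "k - a \<in> {z (Suc k) \<omega>..z k \<omega>}"
      "matpow A (k - a) *v w (k - (k - a)) \<omega> = matpow A (k - a) *v w a \<omega>"
      using zeta_le[of k \<omega>] zeta_le[of "Suc k" \<omega>] by (auto simp: T_def)
  next
    fix b assume "b \<in> {z (Suc k) \<omega>..z k \<omega>}"
    then show "k - (k - b) = b" "k - b \<in> {T k \<omega>..<T (Suc k) \<omega>}"
      using zeta_le[of k \<omega>] zeta_le[of "Suc k" \<omega>] by (auto simp: T_def)
  qed
  ultimately show ?thesis by simp
qed

lemma ubar: "(\<Sum>t = 0..z k \<omega>. matpow A t *v (B *v U (k - t) \<omega>)) = (\<Sum>j\<in>{T k \<omega>..<Suc k}. matpow A (k - j) *v (B *v U j \<omega>))"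
proof (rule sum.reindex_bij_witness[where i="\<lambda>t. k - t" and j="\<lambda>j. k - j"])
  fix a assume "a \<in> {0..z k \<omega>}"
  then show "k - (k - a) = a" "k - a \<in> {T k \<omega>..<Suc k}"
    "matpow A (k - (k - a)) *v (B *v U (k - a) \<omega>) = matpow A a *v (B *v U (k - a) \<omega>)"
    using zeta_le[of k \<omega>] by (auto simp: T_def)
next
  fix b assume "b \<in> {T k \<omega>..<Suc k}"
  then show "k - (k - b) = b" "k - b \<in> {0..z k \<omega>}"
    using zeta_le[of k \<omega>] by (auto simp: T_def)
qed

lemma det_main: "xc (Suc k) \<omega> - Xh (Suc k) \<omega> =
   (1 - of_bool (delta k \<omega>)) *\<^sub>R (A *v (xc k \<omega> - Xh k \<omega>))
   + (\<Sum>t \<in> {z (Suc k) \<omega>..z k \<omega>}. matpow A t *v w (k - t) \<omega>)"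
proof -
  have xs: "xc (Suc k) \<omega> = X (Suc k) \<omega> - nz (Suc k) \<omega>" using X_split[of "Suc k" \<omega>] by simp
  show ?thesis
  proof (cases "delta k \<omega>")
    case True
    have zz: "Suc k - T k \<omega> = z k \<omega> + 1" using zeta_le[of k \<omega>] by (simp add: T_def)
    have "X (Suc k) \<omega> = matpow A (z k \<omega> + 1) *v X (T k \<omega>) \<omega> + (\<Sum>j\<in>{T k \<omega>..<Suc k}. matpow A (k - j) *v (B *v U j \<omega>))
       + (\<Sum>j\<in>{T k \<omega>..<Suc k}. matpow A (k - j) *v w j \<omega>)"
      using unroll[of "T k \<omega>" "Suc k" \<omega>] T_le[of k \<omega>] zz
      by (simp add: matrix_vector_right_distrib sum.distrib algebra_simps)
    moreover have "Xh (Suc k) \<omega> = matpow A (z k \<omega> + 1) *v X (T k \<omega>) \<omega> + (\<Sum>j\<in>{T k \<omega>..<Suc k}. matpow A (k - j) *v (B *v U j \<omega>))"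
      using True by (simp add: Xh_Suc ubar T_def)
    ultimately show ?thesis using True xs wsum_diff[of k \<omega>] by simp
  next
    case False
    have "xc (Suc k) \<omega> - Xh (Suc k) \<omega> = A *v (xc k \<omega> - Xh k \<omega>) + (A *v nz k \<omega> + w k \<omega>) - nz (Suc k) \<omega>"
      using False xs X_Suc[of k \<omega>] X_split[of k \<omega>] by (simp add: Xh_Suc algebra_simps)
    then show ?thesis using False wsum_step[of k \<omega>] wsum_diff[of k \<omega>] by simp
  qed
qed

end


lemma mv_cont: "continuous_on UNIV (\<lambda>v::real^'a. C *v v)"
  by (intro linear_continuous_on matrix_vector_mul_linear[THEN linear_conv_bounded_linear[THEN iffD1]])

lemma mv_meas[measurable]: "f \<in> borel_measurable Mm \<Longrightarrow> (\<lambda>\<omega>. (C::real^'a^'b) *v f \<omega>) \<in> borel_measurable Mm"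
  by (rule measurable_compose[OF _ borel_measurable_continuous_onI[OF mv_cont]])

lemma meas_nat2:
  fixes f g :: "'w \<Rightarrow> nat"
  assumes "f \<in> measurable Mm (count_space UNIV)" "g \<in> measurable Mm (count_space UNIV)"
  shows "(\<lambda>\<omega>. h (f \<omega>) (g \<omega>)) \<in> measurable Mm (count_space UNIV)"
proof (rule measurable_compose_countable[where f="\<lambda>i \<omega>. h i (g \<omega>)" and g=f, OF _ assms(1)])
  fix i show "(\<lambda>\<omega>. h i (g \<omega>)) \<in> measurable Mm (count_space UNIV)"
    by (rule measurable_compose[OF assms(2) measurable_count_space])
qed

lemma meas_gen:
  assumes "gen_events Mm Nm f \<subseteq> G" "G \<subseteq> Pow (space Mm)" "f \<in> space Mm \<rightarrow> space Nm"
  shows "f \<in> measurable (sigma (space Mm) G) Nm"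
  unfolding measurable_def using assms
  by (auto simp: gen_events_def sets_measure_of[OF assms(2)] intro!: sigma_sets.Basic)

lemma gen_events_Pow: "gen_events Mm Nm f \<subseteq> Pow (space Mm)"
  by (auto simp: gen_events_def)

lemma gen_events_sets: "f \<in> measurable Mm Nm \<Longrightarrow> gen_events Mm Nm f \<subseteq> sets Mm"
  by (auto simp: gen_events_def)

lemma sets_gen_stop:
  assumes "a \<in> sigma_sets \<Omega> G" "\<And>j. S j \<in> sets (H j)" "\<And>j. space (H j) = \<Omega>"
    "\<And>g j. g \<in> G \<Longrightarrow> g \<inter> S j \<in> sets (H j)"
  shows "a \<inter> S j \<in> sets (H j)"
  using assms(1)
proof (induction arbitrary: j)
  case (Basic a) then show ?case using assms(4) by blast
next
  case Empty then show ?case by simp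
next
  case (Compl a)
  have "(\<Omega> - a) \<inter> S j = S j - (a \<inter> S j)"
    using sets.sets_into_space[OF assms(2)[of j]] assms(3)[of j] by auto
  then show ?case using Compl.IH[of j] assms(2)[of j] by auto
next
  case (Union a)
  have "(\<Union>i. a i) \<inter> S j = (\<Union>i. a i \<inter> S j)" by auto
  moreover have "(\<Union>i. a i \<inter> S j) \<in> sets (H j)"
    using Union.IH by (intro sets.countable_UN[of "\<lambda>i. a i \<inter> S j" UNIV]) auto
  ultimately show ?case by simp
qed



locale mctx = clp +
  fixes M and N :: nat
  assumes PS: "prob_space M"
   and x0m: "x0 \<in> borel_measurable M"
   and wm: "\<And>k. k \<le> N \<Longrightarrow> w k \<in> borel_measurable M"
   and taum: "\<And>k. k \<le> N + 1 \<Longrightarrow> tau k \<in> measurable M (count_space UNIV)"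
   and indep: "prob_space.indep_sets M (prim_events M x0 w tau) ({PX0} \<union> PW ` {..N} \<union> PTau ` {..N + 1})"
   and deltam: "\<And>k. k \<le> N \<Longrightarrow> delta k \<in> measurable (trigger_info M X U tau delta k) (count_space UNIV)"
   and x0i: "\<And>i. integrable M (\<lambda>\<omega>. x0 \<omega> $ i)"
   and wi: "\<And>k a. k \<le> N \<Longrightarrow> integrable M (\<lambda>\<omega>. a \<bullet> w k \<omega>)"
   and wz: "\<And>k a. k \<le> N \<Longrightarrow> (\<integral>\<omega>. a \<bullet> w k \<omega> \<partial>M) = 0"
begin

definition "Ij j = {PX0} \<union> PW ` {..<j} \<union> PTau ` {..N + 1}"
definition "Hg j = (\<Union>i\<in>Ij j. prim_events M x0 w tau i)"
definition "H j = sigma (space M) (Hg j)"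
abbreviation "F \<equiv> trigger_info M X U tau delta"
definition "E k j = {\<omega> \<in> space M. T k \<omega> \<le> j}"

lemma prim_Pow: "prim_events M x0 w tau i \<subseteq> Pow (space M)"
  by (cases i) (auto simp: prim_events_def gen_events_def)

lemma Hg_Pow: "Hg j \<subseteq> Pow (space M)"
  using prim_Pow by (auto simp: Hg_def)

lemma space_H[simp]: "space (H j) = space M"
  by (simp add: H_def space_measure_of_conv)

lemma sets_H: "sets (H j) = sigma_sets (space M) (Hg j)"
  by (simp add: H_def sets_measure_of[OF Hg_Pow])

lemma Hg_mono: "j \<le> j' \<Longrightarrow> Hg j \<subseteq> Hg j'"
  by (auto simp: Hg_def Ij_def)

lemma H_mono: "j \<le> j' \<Longrightarrow> sets (H j) \<subseteq> sets (H j')"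
  unfolding sets_H by (rule sigma_sets_mono'[OF Hg_mono])

lemma meas_H_mono: "j \<le> j' \<Longrightarrow> f \<in> measurable (H j) Nm \<Longrightarrow> f \<in> measurable (H j') Nm"
  by (rule measurable_from_subalg[of "H j'" "H j"]) (auto simp: subalgebra_def H_mono)

lemma x0_H[measurable]: "x0 \<in> borel_measurable (H j)"
  unfolding H_def
  by (rule meas_gen[OF _ Hg_Pow]) (auto simp: Hg_def Ij_def prim_events_def)

lemma w_H: "i < j \<Longrightarrow> w i \<in> borel_measurable (H j)"
  unfolding H_def
  by (rule meas_gen[OF _ Hg_Pow]) (auto simp: Hg_def Ij_def prim_events_def)

lemma tau_H: "i \<le> N + 1 \<Longrightarrow> tau i \<in> measurable (H j) (count_space UNIV)"
  unfolding H_def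
  by (rule meas_gen[OF _ Hg_Pow]) (auto simp: Hg_def Ij_def prim_events_def)

lemma z_meas_gen:
  assumes "\<And>i. i \<le> N + 1 \<Longrightarrow> tau i \<in> measurable Mm (count_space UNIV)" "t \<le> N + 1"
  shows "z t \<in> measurable Mm (count_space UNIV)"
  using assms(2)
proof (induction t)
  case 0 then show ?case by simp
next
  case (Suc t)
  have "z (Suc t) = (\<lambda>\<omega>. (\<lambda>a b. if a < b + 1 then a else b + 1) (tau (Suc t) \<omega>) (z t \<omega>))"
    by (rule ext) simp
  then show ?case using Suc assms(1)[of "Suc t"] by (simp only:) (rule meas_nat2, auto)
qed

lemma z_H: "t \<le> N + 1 \<Longrightarrow> z t \<in> measurable (H j) (count_space UNIV)"
  by (rule z_meas_gen[OF tau_H])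

lemma z_M: "t \<le> N + 1 \<Longrightarrow> z t \<in> measurable M (count_space UNIV)"
  by (rule z_meas_gen[OF taum])

lemma T_H: "t \<le> N + 1 \<Longrightarrow> T t \<in> measurable (H j) (count_space UNIV)"
proof -
  assume t: "t \<le> N + 1"
  have "T t = (\<lambda>\<omega>. (\<lambda>a. t - a) (z t \<omega>))" by (rule ext) (simp add: T_def)
  then show ?thesis using measurable_compose[OF z_H[OF t] measurable_count_space] by simp
qed

lemma E_H: "k \<le> N + 1 \<Longrightarrow> E k j \<in> sets (H j')"
proof -
  assume k: "k \<le> N + 1"
  have "E k j = T k -` {..j} \<inter> space (H j')" by (auto simp: E_def)
  then show ?thesis using measurable_sets[OF T_H[OF k], of "{..j}"] by simp
qed

lemma E_top: "E k k = space M"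
  using T_le by (auto simp: E_def)

lemma E_mono: "s \<le> k \<Longrightarrow> E k j \<subseteq> E s j"
  using T_mono by (auto simp: E_def intro: le_trans)

lemma Hg_M: "j \<le> N + 1 \<Longrightarrow> Hg j \<subseteq> sets M"
proof -
  assume j: "j \<le> N + 1"
  have "prim_events M x0 w tau i \<subseteq> sets M" if "i \<in> Ij j" for i
  proof -
    from that consider "i = PX0" | a where "i = PW a" "a < j" | a where "i = PTau a" "a \<le> N + 1"
      by (auto simp: Ij_def)
    then show ?thesis
    proof cases
      case 1 then show ?thesis using gen_events_sets[OF x0m] by (simp add: prim_events_def)
    next
      case (2 a) then show ?thesis using gen_events_sets[OF wm[of a]] j by (simp add: prim_events_def)
    next
      case (3 a) then show ?thesis using gen_events_sets[OF taum[of a]] by (simp add: prim_events_def)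
    qed
  qed
  then show ?thesis by (auto simp: Hg_def)
qed

lemma H_M: "j \<le> N + 1 \<Longrightarrow> sets (H j) \<subseteq> sets M"
  unfolding sets_H by (rule sets.sigma_sets_subset[OF Hg_M])

definition "Fg k =
     ((\<Union>t\<in>{..k}. gen_events M borel (\<lambda>\<omega>. X (t - zeta tau t \<omega>) \<omega>))
    \<union> (\<Union>t\<in>{..k}. gen_events M (count_space UNIV) (zeta tau t))
    \<union> (\<Union>t\<in>{..k}. gen_events M borel
          (\<lambda>\<omega>. case eta tau delta t \<omega> of enat j \<Rightarrow> X (t - j) \<omega> | \<infinity> \<Rightarrow> 0))
    \<union> (\<Union>t\<in>{..k}. gen_events M (count_space UNIV) (eta tau delta t))
    \<union> (\<Union>s\<in>{..<k}. gen_events M (count_space UNIV) (delta s))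
    \<union> (\<Union>s\<in>{..<k}. gen_events M borel (U s)))"

lemma F_eq: "F k = sigma (space M) (Fg k)"
  by (simp add: trigger_info_def Fg_def)

lemma Fg_Pow: "Fg k \<subseteq> Pow (space M)"
  unfolding Fg_def by (auto simp: gen_events_def)

lemma space_F[simp]: "space (F k) = space M"
  by (simp add: F_eq space_measure_of_conv)

lemma sets_F: "sets (F k) = sigma_sets (space M) (Fg k)"
  by (simp add: F_eq sets_measure_of[OF Fg_Pow])

lemma Fg_mono: "k \<le> k' \<Longrightarrow> Fg k \<subseteq> Fg k'"
  unfolding Fg_def by (intro Un_mono UN_mono) auto

lemma F_mono: "k \<le> k' \<Longrightarrow> sets (F k) \<subseteq> sets (F k')"
  unfolding sets_F by (rule sigma_sets_mono'[OF Fg_mono])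

lemma meas_F_mono: "k \<le> k' \<Longrightarrow> f \<in> measurable (F k) Nm \<Longrightarrow> f \<in> measurable (F k') Nm"
  by (rule measurable_from_subalg[of "F k'" "F k"]) (auto simp: subalgebra_def F_mono)

lemma meas_F_gen: "gen_events M Nm f \<subseteq> Fg k \<Longrightarrow> f \<in> space M \<rightarrow> space Nm \<Longrightarrow> f \<in> measurable (F k) Nm"
  unfolding F_eq by (rule meas_gen[OF _ Fg_Pow])

definition "SP k \<longleftrightarrow> (\<forall>j. \<forall>G\<in>sets (F k). G \<inter> E k j \<in> sets (H j))"

lemma SP_F_H: "SP k \<Longrightarrow> sets (F k) \<subseteq> sets (H k)"
proof
  fix G assume "SP k" "G \<in> sets (F k)"
  then have "G \<inter> E k k \<in> sets (H k)" by (auto simp: SP_def)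
  moreover have "G \<subseteq> space M" using sets.sets_into_space[OF \<open>G \<in> sets (F k)\<close>] by simp
  ultimately show "G \<in> sets (H k)" by (simp add: E_top Int_absorb2)
qed

lemma delta_H: "s \<le> N \<Longrightarrow> SP s \<Longrightarrow> delta s \<in> measurable (H s) (count_space UNIV)"
  by (rule measurable_from_subalg[of "H s" "F s"]) (auto simp: subalgebra_def SP_F_H deltam)

end


context mctx begin

lemma U_fun: "U b = (\<lambda>\<omega>. - (L b *v Xh b \<omega>))"
  by (rule ext) (simp add: U_def')

lemma XH:
  assumes "a \<le> N + 1" "\<And>s. s < a \<Longrightarrow> delta s \<in> measurable (H s) (count_space UNIV)"
  shows "\<forall>b\<le>a. X b \<in> borel_measurable (H b) \<and> Xh b \<in> borel_measurable (H b)"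
  using assms
proof (induction a)
  case 0
  have "X 0 = x0" "Xh 0 = (\<lambda>_. m0)" by (auto simp: X0 Xh0)
  then show ?case by simp
next
  case (Suc a)
  have IH: "\<forall>b\<le>a. X b \<in> borel_measurable (H b) \<and> Xh b \<in> borel_measurable (H b)"
    using Suc by simp
  have Xa: "X b \<in> borel_measurable (H a)" if "b \<le> a" for b
    using IH that meas_H_mono[of b a] by blast
  have Xha: "Xh b \<in> borel_measurable (H a)" if "b \<le> a" for b
    using IH that meas_H_mono[of b a] by blast
  have Ua: "U b \<in> borel_measurable (H a)" if "b \<le> a" for b
    using Xha[OF that] by (subst U_fun) (intro borel_measurable_uminus mv_meas)
  have da: "delta a \<in> measurable (H a) (count_space UNIV)" using Suc.prems(2) by simp
  have Xs: "X (Suc a) \<in> borel_measurable (H (Suc a))"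
  proof -
    have "X (Suc a) = (\<lambda>\<omega>. A *v X a \<omega> + B *v U a \<omega> + w a \<omega>)" by (rule ext) (simp add: X_Suc)
    moreover have "(\<lambda>\<omega>. A *v X a \<omega> + B *v U a \<omega>) \<in> borel_measurable (H (Suc a))"
      by (rule meas_H_mono[of a], simp, rule borel_measurable_add[OF mv_meas[OF Xa] mv_meas[OF Ua]]) auto
    moreover have "w a \<in> borel_measurable (H (Suc a))" by (rule w_H) simp
    ultimately show ?thesis by simp
  qed
  have Xhs: "Xh (Suc a) \<in> borel_measurable (H (Suc a))"
  proof -
    define G where "G i \<omega> = matpow A (i + 1) *v X (a - i) \<omega> + (\<Sum>t = 0..i. matpow A t *v (B *v U (a - t) \<omega>))" for i \<omega>
    have G: "G i \<in> borel_measurable (H a)" for i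
      unfolding G_def[abs_def]
      by (rule borel_measurable_add[OF mv_meas[OF Xa] borel_measurable_sum[OF mv_meas[OF mv_meas[OF Ua]]]]) auto
    have Gz: "(\<lambda>\<omega>. G (z a \<omega>) \<omega>) \<in> borel_measurable (H a)"
      by (rule measurable_compose_countable[OF G z_H]) (use Suc.prems in simp)
    have eq: "Xh (Suc a) = (\<lambda>\<omega>. if delta a \<omega> then G (z a \<omega>) \<omega> else A *v Xh a \<omega> + B *v U a \<omega>)"
      by (rule ext) (simp add: Xh_Suc G_def)
    have "Xh (Suc a) \<in> borel_measurable (H a)"
      unfolding eq
    proof (rule measurable_If[OF Gz])
      show "(\<lambda>\<omega>. A *v Xh a \<omega> + B *v U a \<omega>) \<in> borel_measurable (H a)"
        by (rule borel_measurable_add[OF mv_meas[OF Xha] mv_meas[OF Ua]]) auto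
      show "{\<omega> \<in> space (H a). delta a \<omega>} \<in> sets (H a)" using da by (simp add: pred_def)
    qed
    then show ?thesis by (rule meas_H_mono[rotated]) simp
  qed
  show ?case using IH Xs Xhs by (auto simp: le_Suc_eq)
qed


lemma Fg_X: "t \<le> k \<Longrightarrow> gen_events M borel (\<lambda>\<omega>. X (t - z t \<omega>) \<omega>) \<subseteq> Fg k"
  unfolding Fg_def by blast
lemma Fg_z: "t \<le> k \<Longrightarrow> gen_events M (count_space UNIV) (z t) \<subseteq> Fg k"
  unfolding Fg_def by blast
lemma Fg_V: "t \<le> k \<Longrightarrow> gen_events M borel (\<lambda>\<omega>. case eta tau delta t \<omega> of enat j \<Rightarrow> X (t - j) \<omega> | \<infinity> \<Rightarrow> 0) \<subseteq> Fg k"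
  unfolding Fg_def by blast
lemma Fg_eta: "t \<le> k \<Longrightarrow> gen_events M (count_space UNIV) (eta tau delta t) \<subseteq> Fg k"
  unfolding Fg_def by blast
lemma Fg_delta: "s < k \<Longrightarrow> gen_events M (count_space UNIV) (delta s) \<subseteq> Fg k"
  unfolding Fg_def by blast
lemma Fg_U: "s < k \<Longrightarrow> gen_events M borel (U s) \<subseteq> Fg k"
  unfolding Fg_def by blast
lemma Xh_F: "s \<le> N + 1 \<Longrightarrow> Xh s \<in> borel_measurable (F s)"
proof (induction s)
  case 0
  have "Xh 0 = (\<lambda>_. m0)" by (auto simp: Xh0)
  then show ?case by simp
next
  case (Suc a)
  have Ug: "U b \<in> borel_measurable (F (Suc a))" if "b \<le> a" for b
    by (rule meas_F_gen[OF Fg_U]) (use that in auto)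
  have Y: "(\<lambda>\<omega>. X (a - z a \<omega>) \<omega>) \<in> borel_measurable (F (Suc a))"
    by (rule meas_F_gen[OF Fg_X]) auto
  have zF: "z a \<in> measurable (F (Suc a)) (count_space UNIV)"
    by (rule meas_F_gen[OF Fg_z]) auto
  have dF: "delta a \<in> measurable (F (Suc a)) (count_space UNIV)"
    by (rule meas_F_mono[of a]) (use deltam[of a] Suc.prems in auto)
  have XhF: "Xh a \<in> borel_measurable (F (Suc a))"
    by (rule meas_F_mono[of a]) (use Suc in auto)
  define G where "G i \<omega> = matpow A (i + 1) *v X (a - z a \<omega>) \<omega> + (\<Sum>t = 0..i. matpow A t *v (B *v U (a - t) \<omega>))" for i \<omega>
  have G: "G i \<in> borel_measurable (F (Suc a))" for i
    unfolding G_def[abs_def]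
    by (rule borel_measurable_add[OF mv_meas[OF Y] borel_measurable_sum[OF mv_meas[OF mv_meas[OF Ug]]]]) auto
  have Gz: "(\<lambda>\<omega>. G (z a \<omega>) \<omega>) \<in> borel_measurable (F (Suc a))"
    by (rule measurable_compose_countable[OF G zF])
  have eq: "Xh (Suc a) = (\<lambda>\<omega>. if delta a \<omega> then G (z a \<omega>) \<omega> else A *v Xh a \<omega> + B *v U a \<omega>)"
    by (rule ext) (simp add: Xh_Suc G_def)
  show ?case
    unfolding eq
  proof (rule measurable_If[OF Gz])
    show "(\<lambda>\<omega>. A *v Xh a \<omega> + B *v U a \<omega>) \<in> borel_measurable (F (Suc a))"
      by (rule borel_measurable_add[OF mv_meas[OF XhF] mv_meas[OF Ug]]) auto
    show "{\<omega> \<in> space (F (Suc a)). delta a \<omega>} \<in> sets (F (Suc a))" using dF by (simp add: pred_def)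
  qed
qed

lemma U_F: "s \<le> N + 1 \<Longrightarrow> U s \<in> borel_measurable (F s)"
proof -
  assume "s \<le> N + 1"
  then have "(\<lambda>\<omega>. - (L s *v Xh s \<omega>)) \<in> borel_measurable (F s)"
    using Xh_F by (intro borel_measurable_uminus[OF mv_meas]) auto
  then show ?thesis by (simp only: U_fun)
qed

end


context mctx begin

definition "RS k j = restrict_space (H j) (E k j)"
definition "V t \<omega> = (case eta tau delta t \<omega> of enat a \<Rightarrow> X (t - a) \<omega> | \<infinity> \<Rightarrow> 0)"

lemma E_sub: "E k j \<subseteq> space M" by (auto simp: E_def)

lemma space_RS[simp]: "space (RS k j) = E k j"
  using E_sub by (auto simp: RS_def space_restrict_space)

lemma sets_RS_iff: "k \<le> N + 1 \<Longrightarrow> Q \<in> sets (RS k j) \<longleftrightarrow> Q \<subseteq> E k j \<and> Q \<in> sets (H j)"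
  unfolding RS_def using E_sub E_H[of k j j]
  by (subst sets_restrict_space_iff) (auto simp: Int_absorb2)

lemma gen_RS:
  assumes "k \<le> N + 1" "f \<in> measurable (RS k j) Nm" "g \<in> gen_events M Nm f"
  shows "g \<inter> E k j \<in> sets (H j)"
proof -
  obtain S where S: "S \<in> sets Nm" "g = f -` S \<inter> space M" using assms(3) by (auto simp: gen_events_def)
  have "f -` S \<inter> space (RS k j) \<in> sets (RS k j)" by (rule measurable_sets[OF assms(2) S(1)])
  moreover have "f -` S \<inter> space (RS k j) = g \<inter> E k j" using S(2) E_sub by auto
  ultimately show ?thesis using sets_RS_iff[OF assms(1)] by auto
qed

lemma F_RS:
  assumes "s \<le> k" "k \<le> N + 1" "SP s" "f \<in> measurable (F s) Nm"
  shows "f \<in> measurable (RS k j) Nm"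
  unfolding measurable_def
proof (intro CollectI conjI ballI)
  show "f \<in> space (RS k j) \<rightarrow> space Nm"
    using measurable_space[OF assms(4)] E_sub by auto
  fix S assume S: "S \<in> sets Nm"
  define G where "G = f -` S \<inter> space M"
  have G: "G \<in> sets (F s)" using measurable_sets[OF assms(4) S] by (simp add: G_def)
  then have "G \<inter> E s j \<in> sets (H j)" using assms(3) by (auto simp: SP_def)
  moreover have "E k j \<in> sets (H j)" using E_H assms by simp
  ultimately have "(G \<inter> E s j) \<inter> E k j \<in> sets (H j)" by auto
  moreover have "(G \<inter> E s j) \<inter> E k j = f -` S \<inter> space (RS k j)"
    using E_mono[OF assms(1), of j] E_sub by (auto simp: G_def)
  ultimately show "f -` S \<inter> space (RS k j) \<in> sets (RS k j)"
    using sets_RS_iff[OF assms(2)] by auto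
qed

lemma H_RS: "f \<in> measurable (H j) Nm \<Longrightarrow> f \<in> measurable (RS k j) Nm"
  unfolding RS_def by (rule measurable_restrict_space1)

lemma V_Suc: "V (Suc t) \<omega> = (if delta t \<omega> then X (T t \<omega>) \<omega> else V t \<omega>)"
  by (cases "eta tau delta t \<omega>") (auto simp: V_def T_def one_enat_def)

lemma V_gen: "V t = (\<lambda>\<omega>. case eta tau delta t \<omega> of enat j \<Rightarrow> X (t - j) \<omega> | \<infinity> \<Rightarrow> 0)"
  by (rule ext) (simp add: V_def)


lemma SP_all: "k \<le> N + 1 \<Longrightarrow> SP k"
proof (induction k rule: less_induct)
  case (less k)
  have SPs: "SP s" if "s < k" for s using less that by simp
  have dH: "delta s \<in> measurable (H s) (count_space UNIV)" if "s < k" for s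
    using delta_H[of s] SPs[OF that] that less.prems by simp
  have XHk: "X b \<in> borel_measurable (H b)" if "b \<le> k" for b
    using XH[OF less.prems dH] that by blast
  have gens: "g \<inter> E k j \<in> sets (H j)" if g: "g \<in> Fg k" for g j
  proof -
    have XT: "(\<lambda>\<omega>. X (T t \<omega>) \<omega>) \<in> borel_measurable (RS k j)" if t: "t \<le> k" for t
    proof -
      have m: "(\<lambda>\<omega>. X (min (T t \<omega>) (min j k)) \<omega>) \<in> borel_measurable (RS k j)"
      proof (rule measurable_compose_countable[where f="\<lambda>i \<omega>. X (min i (min j k)) \<omega>" and g="T t"])
        fix i show "(\<lambda>\<omega>. X (min i (min j k)) \<omega>) \<in> borel_measurable (RS k j)"
        proof (rule H_RS)
          show "(\<lambda>\<omega>. X (min i (min j k)) \<omega>) \<in> borel_measurable (H j)"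
            by (rule meas_H_mono[of "min i (min j k)"]) (auto intro: XHk)
        qed
        show "T t \<in> measurable (RS k j) (count_space UNIV)"
          by (rule H_RS[OF T_H]) (use t less.prems in simp)
      qed
      have eq: "X (min (T t \<omega>) (min j k)) \<omega> = X (T t \<omega>) \<omega>" if "\<omega> \<in> space (RS k j)" for \<omega>
      proof -
        have "T t \<omega> \<le> T k \<omega>" by (rule T_mono[OF t])
        moreover have "T k \<omega> \<le> j" using that by (simp add: E_def)
        moreover have "T t \<omega> \<le> t" by (rule T_le)
        ultimately have "min (T t \<omega>) (min j k) = T t \<omega>" using t by simp
        then show ?thesis by simp
      qed
      show ?thesis using m measurable_cong[of "RS k j" "\<lambda>\<omega>. X (min (T t \<omega>) (min j k)) \<omega>" "\<lambda>\<omega>. X (T t \<omega>) \<omega>", OF eq]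
        by simp
    qed
    have dRS: "delta s \<in> measurable (RS k j) (count_space UNIV)" if "s < k" for s
      by (rule F_RS[OF _ less.prems SPs[OF that] deltam]) (use that less.prems in auto)
    have etaV: "eta tau delta t \<in> measurable (RS k j) (count_space UNIV) \<and> V t \<in> borel_measurable (RS k j)"
      if "t \<le> k" for t
      using that
    proof (induction t)
      case 0
      have "eta tau delta 0 = (\<lambda>_. \<infinity>)" "V 0 = (\<lambda>_. 0)" by (auto simp: V_def)
      then show ?case by simp
    next
      case (Suc t)
      have d: "delta t \<in> measurable (RS k j) (count_space UNIV)" using dRS Suc.prems by simp
      have p: "{\<omega> \<in> space (RS k j). delta t \<omega>} \<in> sets (RS k j)" using d by (simp add: pred_def)
      have IH1: "eta tau delta t \<in> measurable (RS k j) (count_space UNIV)" and IH2: "V t \<in> borel_measurable (RS k j)"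
        using Suc by auto
      have e: "eta tau delta (Suc t) = (\<lambda>\<omega>. if delta t \<omega> then (\<lambda>n. enat (n + 1)) (z t \<omega>) else (\<lambda>e. e + 1) (eta tau delta t \<omega>))"
        by (rule ext) simp
      have zt: "z t \<in> measurable (RS k j) (count_space UNIV)"
        by (rule H_RS[OF z_H]) (use Suc.prems less.prems in simp)
      have 1: "eta tau delta (Suc t) \<in> measurable (RS k j) (count_space UNIV)"
        unfolding e
        by (rule measurable_If[OF measurable_compose[OF zt measurable_count_space] measurable_compose[OF IH1 measurable_count_space] p])
      have v: "V (Suc t) = (\<lambda>\<omega>. if delta t \<omega> then X (T t \<omega>) \<omega> else V t \<omega>)"
        by (rule ext) (rule V_Suc)
      have 2: "V (Suc t) \<in> borel_measurable (RS k j)"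
        unfolding v by (rule measurable_If[OF XT IH2 p]) (use Suc.prems in simp)
      show ?case using 1 2 by blast
    qed
    from g consider (a) t where "t \<le> k" "g \<in> gen_events M borel (\<lambda>\<omega>. X (t - z t \<omega>) \<omega>)"
        | (b) t where "t \<le> k" "g \<in> gen_events M (count_space UNIV) (z t)"
        | (c) t where "t \<le> k" "g \<in> gen_events M borel (\<lambda>\<omega>. case eta tau delta t \<omega> of enat j \<Rightarrow> X (t - j) \<omega> | \<infinity> \<Rightarrow> 0)"
        | (d) t where "t \<le> k" "g \<in> gen_events M (count_space UNIV) (eta tau delta t)"
        | (e) s where "s < k" "g \<in> gen_events M (count_space UNIV) (delta s)"
        | (f) s where "s < k" "g \<in> gen_events M borel (U s)"
      unfolding Fg_def by blast
    then show ?thesis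
    proof cases
      case (a t)
      have "(\<lambda>\<omega>. X (t - z t \<omega>) \<omega>) \<in> borel_measurable (RS k j)" using XT[OF a(1)] by (simp add: T_def)
      then show ?thesis using gen_RS[OF less.prems _ a(2)] by simp
    next
      case (b t)
      have "z t \<in> measurable (RS k j) (count_space UNIV)"
        by (rule H_RS[OF z_H]) (use b less.prems in simp)
      then show ?thesis using gen_RS[OF less.prems _ b(2)] by simp
    next
      case (c t)
      have "V t \<in> borel_measurable (RS k j)" using etaV[OF c(1)] by simp
      then show ?thesis using gen_RS[OF less.prems _ c(2)] by (simp add: V_gen)
    next
      case (d t)
      have "eta tau delta t \<in> measurable (RS k j) (count_space UNIV)" using etaV[OF d(1)] by simp
      then show ?thesis using gen_RS[OF less.prems _ d(2)] by simp
    next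
      case (e s)
      then show ?thesis using gen_RS[OF less.prems dRS[OF e(1)] e(2)] by simp
    next
      case (f s)
      have "U s \<in> borel_measurable (RS k j)"
        by (rule F_RS[OF _ less.prems SPs[OF f(1)] U_F]) (use f less.prems in auto)
      then show ?thesis using gen_RS[OF less.prems _ f(2)] by simp
    qed
  qed
  show "SP k" unfolding SP_def
  proof (intro allI ballI)
    fix j G assume G: "G \<in> sets (F k)"
    show "G \<inter> E k j \<in> sets (H j)"
    proof (rule sets_gen_stop[where H=H and S="\<lambda>j. E k j"])
      show "G \<in> sigma_sets (space M) (Fg k)" using G by (simp add: sets_F)
      show "E k j \<in> sets (H j)" for j using E_H less.prems by simp
      show "space (H j) = space M" for j by simp
      show "g \<inter> E k j \<in> sets (H j)" if "g \<in> Fg k" for g j using gens[OF that] .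
    qed
  qed
qed
end


lemma (in prob_space) indep_set_mono':
  "indep_set A B \<Longrightarrow> A' \<subseteq> A \<Longrightarrow> B' \<subseteq> B \<Longrightarrow> indep_set A' B'"
  unfolding indep_set_def by (rule indep_sets_mono_sets) (auto split: bool.split)

lemma gen_Int_stable: "Int_stable (gen_events Mm Nm f)"
  unfolding Int_stable_def gen_events_def
proof (safe)
  fix S T assume "S \<in> sets Nm" "T \<in> sets Nm"
  then show "\<exists>R. (f -` S \<inter> space Mm) \<inter> (f -` T \<inter> space Mm) = f -` R \<inter> space Mm \<and> R \<in> sets Nm"
    by (intro exI[of _ "S \<inter> T"]) auto
qed

context mctx begin

lemma F_sub: "k \<le> N + 1 \<Longrightarrow> sets (F k) \<subseteq> sets M"
  using SP_F_H[OF SP_all] H_M by blast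

lemma subalg_F: "k \<le> N + 1 \<Longrightarrow> subalgebra M (F k)"
  using F_sub by (auto simp: subalgebra_def)

lemma sfs_F: "k \<le> N + 1 \<Longrightarrow> sigma_finite_subalgebra M (F k)"
proof -
  assume k: "k \<le> N + 1"
  interpret P: prob_space M by (rule PS)
  have "finite_measure_subalgebra M (F k)"
    by unfold_locales (rule subalg_F[OF k])
  then show ?thesis by (rule finite_measure_subalgebra_is_sigma_finite)
qed

lemma indep_H_w:
  assumes j: "j \<le> N"
  shows "prob_space.indep_set M (sets (H j)) (sigma_sets (space M) (gen_events M borel (w j)))"
proof -
  interpret P: prob_space M by (rule PS)
  define I where "I b = (if b then Ij j else {PW j})" for b
  have "P.indep_sets (\<lambda>b. sigma_sets (space M) (\<Union>i\<in>I b. prim_events M x0 w tau i)) UNIV"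
  proof (rule P.indep_sets_collect_sigma)
    show "P.indep_sets (prim_events M x0 w tau) (\<Union>b. I b)"
      by (rule P.indep_sets_mono_index[OF _ indep]) (use j in \<open>auto simp: I_def Ij_def\<close>)
    show "Int_stable (prim_events M x0 w tau i)" for i
      by (cases i) (auto simp: prim_events_def gen_Int_stable)
    show "disjoint_family_on I UNIV"
      by (auto simp: disjoint_family_on_def I_def Ij_def)
  qed
  moreover have "(\<lambda>b. sigma_sets (space M) (\<Union>i\<in>I b. prim_events M x0 w tau i)) =
      case_bool (sets (H j)) (sigma_sets (space M) (gen_events M borel (w j)))"
    by (rule ext) (auto simp: I_def sets_H Hg_def prim_events_def split: bool.split)
  ultimately show ?thesis by (simp add: P.indep_set_def)
qed

lemma indep_int:
  assumes j: "j \<le> N" and D: "D \<in> sets (H j)"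
  shows "(\<integral>\<omega>. indicator D \<omega> * (a \<bullet> w j \<omega>) \<partial>M) = 0"
proof -
  interpret P: prob_space M by (rule PS)
  have DM: "D \<in> sets M" using H_M[of j] D j by auto
  define W where "W = sigma (space M) (gen_events M borel (w j))"
  have wW: "w j \<in> borel_measurable W"
    unfolding W_def by (rule meas_gen[OF order_refl gen_events_Pow]) simp
  have YW: "(\<lambda>\<omega>. a \<bullet> w j \<omega>) \<in> borel_measurable W" using wW by measurable
  have sW: "sets W = sigma_sets (space M) (gen_events M borel (w j))"
    unfolding W_def by (rule sets_measure_of[OF gen_events_Pow])
  have spW: "space W = space M" by (simp add: W_def space_measure_of_conv)
  have iH: "(indicator D :: _ \<Rightarrow> real) \<in> borel_measurable (H j)"
    using D by (rule borel_measurable_indicator)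
  have ind: "P.indep_var borel (indicator D :: _ \<Rightarrow> real) borel (\<lambda>\<omega>. a \<bullet> w j \<omega>)"
    unfolding P.indep_var_eq
  proof (intro conjI)
    show "P.random_variable borel (indicator D :: _ \<Rightarrow> real)" using borel_measurable_indicator[OF DM] by simp
    show "P.random_variable borel (\<lambda>\<omega>. a \<bullet> w j \<omega>)" using wm[OF j] by measurable
    show "P.indep_set (sigma_sets (space M) {(indicator D :: _ \<Rightarrow> real) -` A \<inter> space M |A. A \<in> sets borel})
       (sigma_sets (space M) {(\<lambda>\<omega>. a \<bullet> w j \<omega>) -` A \<inter> space M |A. A \<in> sets borel})"
    proof (rule P.indep_set_mono'[OF indep_H_w[OF j]])
      show "sigma_sets (space M) {(indicator D :: _ \<Rightarrow> real) -` A \<inter> space M |A. A \<in> sets borel} \<subseteq> sets (H j)"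
        using sets.sigma_sets_subset[of "{(indicator D :: _ \<Rightarrow> real) -` A \<inter> space M |A. A \<in> sets borel}" "H j"]
          measurable_sets[OF iH] by auto
      show "sigma_sets (space M) {(\<lambda>\<omega>. a \<bullet> w j \<omega>) -` A \<inter> space M |A. A \<in> sets borel}
          \<subseteq> sigma_sets (space M) (gen_events M borel (w j))"
        unfolding sW[symmetric]
        using sets.sigma_sets_subset[of "{(\<lambda>\<omega>. a \<bullet> w j \<omega>) -` A \<inter> space M |A. A \<in> sets borel}" W]
          measurable_sets[OF YW] spW by auto
    qed
  qed
  moreover have fin: "emeasure M D < \<top>" using P.emeasure_finite[of D] less_top by blast
  have "(\<integral>\<omega>. indicator D \<omega> * (a \<bullet> w j \<omega>) \<partial>M) = (\<integral>\<omega>. indicator D \<omega> \<partial>M) * (\<integral>\<omega>. a \<bullet> w j \<omega> \<partial>M)"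
    by (rule P.indep_var_lebesgue_integral[OF ind]) (use DM wi[OF j] fin in \<open>auto intro!: integrable_real_indicator\<close>)
  then show ?thesis using wz[OF j] by simp
qed

end


definition mb :: "real^'a^'b \<Rightarrow> real" where "mb Mx = onorm (\<lambda>v. Mx *v v)"

lemma bl_mv: "bounded_linear (\<lambda>v::real^'a. (Mx::real^'a^'b) *v v)"
  by (rule matrix_vector_mul_linear[THEN linear_conv_bounded_linear[THEN iffD1]])

lemma mb_le: "norm (Mx *v v) \<le> mb Mx * norm v"
  unfolding mb_def by (rule onorm[OF bl_mv])

lemma mb_nn: "0 \<le> mb Mx"
  unfolding mb_def by (rule onorm_pos_le[OF bl_mv])

context mctx begin

definition "bnd k \<omega> = (\<Sum>i\<in>UNIV. \<bar>x0 \<omega> $ i\<bar>) + norm m0 + (\<Sum>j<k. \<Sum>i\<in>UNIV. \<bar>w j \<omega> $ i\<bar>)"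

lemma bnd_nn: "0 \<le> bnd k \<omega>"
  unfolding bnd_def by (intro add_nonneg_nonneg sum_nonneg) auto

lemma bnd_mono: "k \<le> k' \<Longrightarrow> bnd k \<omega> \<le> bnd k' \<omega>"
  unfolding bnd_def by (auto intro!: sum_mono2 sum_nonneg)

lemma x0_le: "norm (x0 \<omega>) \<le> bnd k \<omega>"
proof -
  have "norm (x0 \<omega>) \<le> (\<Sum>i\<in>UNIV. \<bar>x0 \<omega> $ i\<bar>)" by (rule norm_le_l1_cart)
  also have "\<dots> \<le> bnd k \<omega>" unfolding bnd_def by (simp add: add_nonneg_nonneg sum_nonneg)
  finally show ?thesis .
qed

lemma m0_le: "norm m0 \<le> bnd k \<omega>"
  unfolding bnd_def by (auto intro!: sum_nonneg add_nonneg_nonneg)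

lemma w_le: "j < k \<Longrightarrow> norm (w j \<omega>) \<le> bnd k \<omega>"
proof -
  assume j: "j < k"
  have "norm (w j \<omega>) \<le> (\<Sum>i\<in>UNIV. \<bar>w j \<omega> $ i\<bar>)" by (rule norm_le_l1_cart)
  also have "\<dots> \<le> (\<Sum>j<k. \<Sum>i\<in>UNIV. \<bar>w j \<omega> $ i\<bar>)"
    using j by (intro member_le_sum) (auto intro: sum_nonneg)
  also have "\<dots> \<le> bnd k \<omega>" unfolding bnd_def by (auto intro!: sum_nonneg)
  finally show ?thesis .
qed

lemma bound: "\<exists>C\<ge>0. \<forall>\<omega>. \<forall>b\<le>k. norm (X b \<omega>) \<le> C * bnd k \<omega> \<and> norm (Xh b \<omega>) \<le> C * bnd k \<omega>"
proof (induction k)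
  case 0
  show ?case by (rule exI[of _ 1]) (auto simp: X0 Xh0 x0_le m0_le)
next
  case (Suc a)
  obtain C where C0: "C \<ge> 0" and C: "\<And>\<omega> b. b \<le> a \<Longrightarrow> norm (X b \<omega>) \<le> C * bnd a \<omega> \<and> norm (Xh b \<omega>) \<le> C * bnd a \<omega>"
    using Suc.IH by blast
  define KL where "KL = (\<Sum>t\<le>a. mb (L t))"
  define KP where "KP = (\<Sum>t\<le>Suc a. mb (matpow A t))"
  have KL0: "0 \<le> KL" unfolding KL_def by (intro sum_nonneg mb_nn)
  have KP0: "0 \<le> KP" unfolding KP_def by (intro sum_nonneg mb_nn)
  have KLb: "mb (L t) \<le> KL" if "t \<le> a" for t
    unfolding KL_def using that by (intro member_le_sum) (auto intro: mb_nn)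
  have KPb: "mb (matpow A t) \<le> KP" if "t \<le> Suc a" for t
    unfolding KP_def using that by (intro member_le_sum) (auto intro: mb_nn)
  define C' where "C' = C + mb A * C + mb B * KL * C + 1 + KP * C + KP * (mb B * KL * C)"
  have C'0: "0 \<le> C'" unfolding C'_def using C0 KL0 KP0 mb_nn[of A] mb_nn[of B] by simp
  show ?case
  proof (intro exI[of _ C'] conjI[OF C'0] allI impI)
    fix \<omega> b assume b: "b \<le> Suc a"
    define \<beta> where "\<beta> = bnd (Suc a) \<omega>"
    have \<beta>0: "0 \<le> \<beta>" unfolding \<beta>_def by (rule bnd_nn)
    have Xb: "norm (X c \<omega>) \<le> C * \<beta>" and Xhb: "norm (Xh c \<omega>) \<le> C * \<beta>" if "c \<le> a" for c
    proof -
      have "C * bnd a \<omega> \<le> C * \<beta>" unfolding \<beta>_def using C0 by (intro mult_left_mono bnd_mono) auto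
      then show "norm (X c \<omega>) \<le> C * \<beta>" "norm (Xh c \<omega>) \<le> C * \<beta>" using C[OF that, of \<omega>] by auto
    qed
    have Ub: "norm (B *v U c \<omega>) \<le> mb B * KL * C * \<beta>" if "c \<le> a" for c
    proof -
      have "norm (B *v U c \<omega>) \<le> mb B * norm (U c \<omega>)" by (rule mb_le)
      also have "norm (U c \<omega>) \<le> mb (L c) * norm (Xh c \<omega>)" unfolding U_def' by (simp add: mb_le)
      also have "\<dots> \<le> KL * (C * \<beta>)" using KLb[OF that] Xhb[OF that] KL0 mb_nn[of "L c"]
        by (intro mult_mono) auto
      finally show ?thesis using mb_nn[of B] by (simp add: mult_left_mono mult.assoc)
    qed
    have le_C': "x \<le> C' * \<beta>" if "x \<le> y * \<beta>" "y \<le> C'" for x y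
      using that \<beta>0 by (meson mult_right_mono order_trans)
    show "norm (X b \<omega>) \<le> C' * bnd (Suc a) \<omega> \<and> norm (Xh b \<omega>) \<le> C' * bnd (Suc a) \<omega>"
    proof (cases "b = Suc a")
      case False
      then have "b \<le> a" using b by simp
      have nn: "0 \<le> mb A * C + mb B * KL * C + 1 + KP * C + KP * (mb B * KL * C)"
        using C0 KL0 KP0 mb_nn[of A] mb_nn[of B] by simp
      have "C \<le> C'" using nn unfolding C'_def by linarith
      then show ?thesis using le_C'[OF Xb[OF \<open>b \<le> a\<close>]] le_C'[OF Xhb[OF \<open>b \<le> a\<close>]]
        unfolding \<beta>_def by blast
    next
      case True
      have nX: "norm (X (Suc a) \<omega>) \<le> (mb A * C + mb B * KL * C + 1) * \<beta>"
      proof -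
        have "norm (X (Suc a) \<omega>) \<le> norm (A *v X a \<omega>) + norm (B *v U a \<omega>) + norm (w a \<omega>)"
          unfolding X_Suc by (meson norm_triangle_ineq order_trans add_right_mono)
        also have "norm (A *v X a \<omega>) \<le> mb A * (C * \<beta>)"
          using mb_le[of A "X a \<omega>"] Xb[of a] mb_nn[of A] by (meson mult_left_mono order_trans order_refl)
        also have "norm (w a \<omega>) \<le> \<beta>" unfolding \<beta>_def by (rule w_le) simp
        finally show ?thesis using Ub[of a] by (simp add: algebra_simps)
      qed
      have nXh: "norm (Xh (Suc a) \<omega>) \<le> (KP * C + KP * (mb B * KL * C) + mb A * C + mb B * KL * C) * \<beta>"
      proof (cases "delta a \<omega>")
        case True
        have s1: "norm (matpow A (z a \<omega> + 1) *v X (a - z a \<omega>) \<omega>) \<le> KP * (C * \<beta>)"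
        proof -
          have "norm (matpow A (z a \<omega> + 1) *v X (a - z a \<omega>) \<omega>) \<le> mb (matpow A (z a \<omega> + 1)) * norm (X (a - z a \<omega>) \<omega>)"
            by (rule mb_le)
          also have "\<dots> \<le> KP * (C * \<beta>)"
            using KPb[of "z a \<omega> + 1"] zeta_le[of a \<omega>] Xb[of "a - z a \<omega>"] mb_nn KP0
            by (intro mult_mono) auto
          finally show ?thesis .
        qed
        have s2: "norm (\<Sum>t = 0..z a \<omega>. matpow A t *v (B *v U (a - t) \<omega>)) \<le> KP * (mb B * KL * C * \<beta>)"
        proof -
          have "norm (\<Sum>t = 0..z a \<omega>. matpow A t *v (B *v U (a - t) \<omega>)) \<le> (\<Sum>t = 0..z a \<omega>. norm (matpow A t *v (B *v U (a - t) \<omega>)))"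
            by (rule norm_sum)
          also have "\<dots> \<le> (\<Sum>t = 0..z a \<omega>. mb (matpow A t) * (mb B * KL * C * \<beta>))"
          proof (rule sum_mono)
            fix t assume "t \<in> {0..z a \<omega>}"
            then have t: "a - t \<le> a" by simp
            show "norm (matpow A t *v (B *v U (a - t) \<omega>)) \<le> mb (matpow A t) * (mb B * KL * C * \<beta>)"
              using mb_le[of "matpow A t" "B *v U (a - t) \<omega>"] Ub[OF t] mb_nn[of "matpow A t"]
              by (meson mult_left_mono order_trans)
          qed
          also have "\<dots> \<le> (\<Sum>t\<le>Suc a. mb (matpow A t) * (mb B * KL * C * \<beta>))"
            using zeta_le[of a \<omega>] mb_nn mb_nn[of B] C0 KL0 \<beta>0
            by (intro sum_mono2) (auto intro!: mult_nonneg_nonneg)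
          also have "\<dots> = KP * (mb B * KL * C * \<beta>)" unfolding KP_def by (rule sum_distrib_right[symmetric])
          finally show ?thesis .
        qed
        have "norm (Xh (Suc a) \<omega>) \<le> KP * (C * \<beta>) + KP * (mb B * KL * C * \<beta>)"
          using True s1 s2 unfolding Xh_Suc by (simp add: norm_triangle_le)
        moreover have "0 \<le> (mb A * C + mb B * KL * C) * \<beta>"
          using mb_nn[of A] mb_nn[of B] C0 KL0 \<beta>0 by simp
        ultimately show ?thesis by (simp add: algebra_simps)
      next
        case False
        have "norm (Xh (Suc a) \<omega>) \<le> norm (A *v Xh a \<omega>) + norm (B *v U a \<omega>)"
          using False unfolding Xh_Suc by (simp add: norm_triangle_ineq)
        also have "norm (A *v Xh a \<omega>) \<le> mb A * (C * \<beta>)"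
          using mb_le[of A "Xh a \<omega>"] Xhb[of a] mb_nn[of A] by (meson mult_left_mono order_trans order_refl)
        finally have "norm (Xh (Suc a) \<omega>) \<le> mb A * (C * \<beta>) + mb B * KL * C * \<beta>" using Ub[of a] by simp
        moreover have "0 \<le> (KP * C + KP * (mb B * KL * C)) * \<beta>"
          using KP0 mb_nn[of B] C0 KL0 \<beta>0 by simp
        ultimately show ?thesis by (simp add: algebra_simps)
      qed
      have nn: "0 \<le> C" "0 \<le> KP * C + KP * (mb B * KL * C)" "0 \<le> mb A * C + mb B * KL * C"
        using C0 KL0 KP0 mb_nn[of A] mb_nn[of B] by simp_all
      have c1: "mb A * C + mb B * KL * C + 1 \<le> C'" using nn unfolding C'_def by linarith
      have c2: "KP * C + KP * (mb B * KL * C) + mb A * C + mb B * KL * C \<le> C'" using nn unfolding C'_def by linarith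
      show ?thesis using le_C'[OF nX c1] le_C'[OF nXh c2] unfolding True \<beta>_def by blast
    qed
  qed
qed

end


lemma mv_comp: "((Mx::real^'a^'b) *v v) $ i = (Mx $ i) \<bullet> v"
  by (simp add: matrix_vector_mult_def inner_vec_def mult.commute)

context mctx begin

lemma dH_all: "s \<le> N \<Longrightarrow> delta s \<in> measurable (H s) (count_space UNIV)"
  using delta_H[OF _ SP_all] by simp

lemma X_M: "k \<le> N + 1 \<Longrightarrow> X k \<in> borel_measurable M"
proof -
  assume k: "k \<le> N + 1"
  have "X k \<in> borel_measurable (H k)"
    using XH[OF k, of] dH_all k by auto
  then show ?thesis
    by (rule measurable_from_subalg[rotated]) (use H_M[OF k] in \<open>auto simp: subalgebra_def\<close>)
qed

lemma X_int: "k \<le> N + 1 \<Longrightarrow> integrable M (\<lambda>\<omega>. X k \<omega> $ i)"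
proof -
  assume k: "k \<le> N + 1"
  interpret P: prob_space M by (rule PS)
  obtain C where C: "\<And>\<omega>. norm (X k \<omega>) \<le> C * bnd k \<omega>" "C \<ge> 0" using bound[of k] by blast
  have wc: "integrable M (\<lambda>\<omega>. w j \<omega> $ l)" if "j < k" for j l
  proof -
    have "(\<lambda>\<omega>. w j \<omega> $ l) = (\<lambda>\<omega>. axis l 1 \<bullet> w j \<omega>)"
      by (rule ext) (simp add: cart_eq_inner_axis inner_commute)
    then show ?thesis using wi[of j "axis l 1"] that k by simp
  qed
  have i1: "integrable M (\<lambda>\<omega>. \<Sum>i\<in>UNIV. \<bar>x0 \<omega> $ i\<bar>)"
    by (rule Bochner_Integration.integrable_sum, rule integrable_abs, rule x0i)
  have i2: "integrable M (\<lambda>\<omega>. norm m0)" by (rule P.integrable_const)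
  have i3: "integrable M (\<lambda>\<omega>. \<Sum>j<k. \<Sum>i\<in>UNIV. \<bar>w j \<omega> $ i\<bar>)"
    by (rule Bochner_Integration.integrable_sum, rule Bochner_Integration.integrable_sum, rule integrable_abs, rule wc) simp
  have "integrable M (bnd k)"
    unfolding bnd_def[abs_def] by (rule Bochner_Integration.integrable_add[OF Bochner_Integration.integrable_add[OF i1 i2] i3])
  then have ib: "integrable M (\<lambda>\<omega>. C * bnd k \<omega>)" by (rule integrable_mult_right)
  show ?thesis
  proof (rule Bochner_Integration.integrable_bound[OF ib])
    show "(\<lambda>\<omega>. X k \<omega> $ i) \<in> borel_measurable M"
      by (rule measurable_compose[OF X_M[OF k] borel_measurable_nth])
    show "AE \<omega> in M. norm (X k \<omega> $ i) \<le> norm (C * bnd k \<omega>)"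
    proof (rule AE_I2)
      fix \<omega>
      have "norm (X k \<omega> $ i) \<le> norm (X k \<omega>)" using component_le_norm_cart[of "X k \<omega>" i] by simp
      also have "\<dots> \<le> C * bnd k \<omega>" by (rule C)
      also have "\<dots> \<le> norm (C * bnd k \<omega>)" by simp
      finally show "norm (X k \<omega> $ i) \<le> norm (C * bnd k \<omega>)" .
    qed
  qed
qed

definition "Yw k j i \<omega> = (matpow A (k - 1 - j) $ i) \<bullet> w j \<omega>"

lemma nz_comp: "nz k \<omega> $ i = (\<Sum>j<k. indicator (E k j) \<omega> * Yw k j i \<omega>)" if "\<omega> \<in> space M"
proof -
  have "nz k \<omega> = (\<Sum>j\<in>{j\<in>{..<k}. T k \<omega> \<le> j}. matpow A (k - 1 - j) *v w j \<omega>)"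
    unfolding nz_def by (rule sum.cong) auto
  also have "\<dots> = (\<Sum>j<k. if T k \<omega> \<le> j then matpow A (k - 1 - j) *v w j \<omega> else 0)"
    by (rule sum.inter_filter) simp
  finally have nzeq: "nz k \<omega> = (\<Sum>j<k. if T k \<omega> \<le> j then matpow A (k - 1 - j) *v w j \<omega> else 0)" .
  have "nz k \<omega> $ i = (\<Sum>j<k. (if T k \<omega> \<le> j then matpow A (k - 1 - j) *v w j \<omega> else 0) $ i)"
    by (simp only: nzeq sum_component)
  also have "\<dots> = (\<Sum>j<k. indicator (E k j) \<omega> * Yw k j i \<omega>)"
  proof (rule sum.cong)
    fix j show "(if T k \<omega> \<le> j then matpow A (k - 1 - j) *v w j \<omega> else 0) $ i = indicator (E k j) \<omega> * Yw k j i \<omega>"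
      using that by (auto simp: E_def Yw_def mv_comp indicator_def)
  qed simp
  finally show ?thesis .
qed

lemma Yw_int: "j < k \<Longrightarrow> k \<le> N + 1 \<Longrightarrow> integrable M (Yw k j i)"
  unfolding Yw_def[abs_def] by (rule wi) simp

lemma E_M: "k \<le> N + 1 \<Longrightarrow> j \<le> N + 1 \<Longrightarrow> E k j \<in> sets M"
  using E_H H_M by blast

lemma nz_int: "k \<le> N + 1 \<Longrightarrow> integrable M (\<lambda>\<omega>. nz k \<omega> $ i)"
proof -
  assume k: "k \<le> N + 1"
  have "integrable M (\<lambda>\<omega>. \<Sum>j<k. indicator (E k j) \<omega> * Yw k j i \<omega>)"
  proof (rule Bochner_Integration.integrable_sum)
    fix j assume "j \<in> {..<k}"
    then have j: "j < k" by simp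
    have "integrable M (\<lambda>\<omega>. Yw k j i \<omega> * indicator (E k j) \<omega>)"
      by (rule integrable_real_mult_indicator[OF E_M Yw_int[OF j k]]) (use j k in simp_all)
    then show "integrable M (\<lambda>\<omega>. indicator (E k j) \<omega> * Yw k j i \<omega>)" by (simp add: mult.commute)
  qed
  moreover have "integrable M (\<lambda>\<omega>. nz k \<omega> $ i) \<longleftrightarrow> integrable M (\<lambda>\<omega>. \<Sum>j<k. indicator (E k j) \<omega> * Yw k j i \<omega>)"
    by (rule Bochner_Integration.integrable_cong) (simp_all add: nz_comp)
  ultimately show ?thesis by simp
qed

lemma nz_zero:
  assumes k: "k \<le> N + 1" and G: "G \<in> sets (F k)"
  shows "(\<integral>\<omega>. indicator G \<omega> * nz k \<omega> $ i \<partial>M) = 0"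
proof -
  have GM: "G \<in> sets M" using F_sub[OF k] G by auto
  have "(\<integral>\<omega>. indicator G \<omega> * nz k \<omega> $ i \<partial>M) = (\<integral>\<omega>. (\<Sum>j<k. indicator (G \<inter> E k j) \<omega> * Yw k j i \<omega>) \<partial>M)"
    by (rule Bochner_Integration.integral_cong) (simp_all only: nz_comp sum_distrib_left indicator_inter_arith mult.assoc refl)
  also have "\<dots> = (\<Sum>j<k. (\<integral>\<omega>. indicator (G \<inter> E k j) \<omega> * Yw k j i \<omega> \<partial>M))"
  proof (rule Bochner_Integration.integral_sum)
    fix j assume "j \<in> {..<k}"
    then have j: "j < k" by simp
    have "integrable M (\<lambda>\<omega>. Yw k j i \<omega> * indicator (G \<inter> E k j) \<omega>)"
      by (rule integrable_real_mult_indicator[OF _ Yw_int[OF j k]]) (use j k GM E_M in auto)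
    then show "integrable M (\<lambda>\<omega>. indicator (G \<inter> E k j) \<omega> * Yw k j i \<omega>)" by (simp add: mult.commute)
  qed
  also have "\<dots> = 0"
  proof (rule sum.neutral, intro ballI)
    fix j assume "j \<in> {..<k}"
    then have j: "j < k" by simp
    have D: "G \<inter> E k j \<in> sets (H j)" using SP_all[OF k] G by (auto simp: SP_def)
    show "(\<integral>\<omega>. indicator (G \<inter> E k j) \<omega> * Yw k j i \<omega> \<partial>M) = 0"
      unfolding Yw_def by (rule indep_int[OF _ D]) (use j k in simp)
  qed
  finally show ?thesis .
qed

lemma xc_F: "k \<le> N + 1 \<Longrightarrow> xc k \<in> borel_measurable (F k)"
proof -
  assume k: "k \<le> N + 1"
  define Gc where "Gc i \<omega> = matpow A i *v X (k - z k \<omega>) \<omega> + (\<Sum>j\<in>{k - i..<k}. matpow A (k - 1 - j) *v (B *v U j \<omega>))" for i \<omega>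
  have Y: "(\<lambda>\<omega>. X (k - z k \<omega>) \<omega>) \<in> borel_measurable (F k)"
    by (rule meas_F_gen[OF Fg_X]) auto
  have Ug: "U j \<in> borel_measurable (F k)" if "j < k" for j
    by (rule meas_F_gen[OF Fg_U]) (use that in auto)
  have zF: "z k \<in> measurable (F k) (count_space UNIV)"
    by (rule meas_F_gen[OF Fg_z]) auto
  have G: "Gc i \<in> borel_measurable (F k)" for i
    unfolding Gc_def[abs_def]
    by (rule borel_measurable_add[OF mv_meas[OF Y] borel_measurable_sum[OF mv_meas[OF mv_meas[OF Ug]]]]) auto
  have "(\<lambda>\<omega>. Gc (z k \<omega>) \<omega>) \<in> borel_measurable (F k)"
    by (rule measurable_compose_countable[OF G zF])
  moreover have "xc k = (\<lambda>\<omega>. Gc (z k \<omega>) \<omega>)"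
  proof (rule ext)
    fix \<omega>
    have "k - T k \<omega> = z k \<omega>" "T k \<omega> = k - z k \<omega>" using zeta_le[of k \<omega>] by (auto simp: T_def)
    then show "xc k \<omega> = Gc (z k \<omega>) \<omega>" by (simp add: xc_def Gc_def)
  qed
  ultimately show ?thesis by simp
qed

lemma ce_comp:
  assumes k: "k \<le> N + 1"
  shows "AE \<omega> in M. real_cond_exp M (F k) (\<lambda>\<omega>. X k \<omega> $ i) \<omega> = xc k \<omega> $ i"
proof -
  interpret S: sigma_finite_subalgebra M "F k" by (rule sfs_F[OF k])
  have xcX: "xc k \<omega> $ i = X k \<omega> $ i - nz k \<omega> $ i" for \<omega>
    using X_split[of k \<omega>] by simp
  have ixc: "integrable M (\<lambda>\<omega>. xc k \<omega> $ i)"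
    unfolding xcX by (rule Bochner_Integration.integrable_diff[OF X_int[OF k] nz_int[OF k]])
  show ?thesis
  proof (rule S.real_cond_exp_charact)
    fix G assume G: "G \<in> sets (F k)"
    have GM: "G \<in> sets M" using F_sub[OF k] G by auto
    have i1: "integrable M (\<lambda>\<omega>. indicator G \<omega> * X k \<omega> $ i)"
      using integrable_real_mult_indicator[OF GM X_int[OF k]] by (simp add: mult.commute)
    have i2: "integrable M (\<lambda>\<omega>. indicator G \<omega> * nz k \<omega> $ i)"
      using integrable_real_mult_indicator[OF GM nz_int[OF k]] by (simp add: mult.commute)
    have "(\<integral>\<omega>. indicator G \<omega> * xc k \<omega> $ i \<partial>M) = (\<integral>\<omega>. indicator G \<omega> * X k \<omega> $ i - indicator G \<omega> * nz k \<omega> $ i \<partial>M)"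
      by (simp add: xcX right_diff_distrib)
    also have "\<dots> = (\<integral>\<omega>. indicator G \<omega> * X k \<omega> $ i \<partial>M)"
      using Bochner_Integration.integral_diff[OF i1 i2] nz_zero[OF k G] by simp
    finally show "(\<integral>x\<in>G. X k x $ i \<partial>M) = (\<integral>x\<in>G. xc k x $ i \<partial>M)"
      by (simp add: set_lebesgue_integral_def)
  next
    show "integrable M (\<lambda>\<omega>. X k \<omega> $ i)" by (rule X_int[OF k])
    show "integrable M (\<lambda>\<omega>. xc k \<omega> $ i)" by (rule ixc)
    show "(\<lambda>\<omega>. xc k \<omega> $ i) \<in> borel_measurable (F k)"
      by (rule measurable_compose[OF xc_F[OF k] borel_measurable_nth])
  qed
qed

lemma ce_vec:
  assumes k: "k \<le> N + 1"
  shows "AE \<omega> in M. cond_exp_vec M (F k) (X k) \<omega> = xc k \<omega>"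
proof -
  have "AE \<omega> in M. \<forall>i\<in>UNIV. real_cond_exp M (F k) (\<lambda>\<omega>. X k \<omega> $ i) \<omega> = xc k \<omega> $ i"
    by (rule eventually_ball_finite) (auto intro: ce_comp[OF k])
  then show ?thesis
    by eventually_elim (simp add: cond_exp_vec_def vec_eq_iff)
qed

end


lemma gauss_facts:
  assumes P: "prob_space M" and G: "gaussian_vec M X m C" and psd: "0 \<le> a \<bullet> (C *v a)"
  shows "integrable M (\<lambda>\<omega>. a \<bullet> X \<omega>) \<and> (\<integral>\<omega>. a \<bullet> X \<omega> \<partial>M) = a \<bullet> m"
proof -
  interpret P: prob_space M by (rule P)
  have Xm: "X \<in> borel_measurable M" using G by (simp add: gaussian_vec_def)
  then have Ym: "(\<lambda>\<omega>. a \<bullet> X \<omega>) \<in> borel_measurable M" by measurable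
  show ?thesis
  proof (cases "a \<bullet> (C *v a) = 0")
    case True
    then have ae: "AE \<omega> in M. a \<bullet> X \<omega> = a \<bullet> m" using G by (simp add: gaussian_vec_def)
    have "integrable M (\<lambda>\<omega>. a \<bullet> X \<omega>) \<longleftrightarrow> integrable M (\<lambda>\<omega>. a \<bullet> m)"
      by (rule integrable_cong_AE[OF Ym _ ae]) simp
    moreover have "(\<integral>\<omega>. a \<bullet> X \<omega> \<partial>M) = (\<integral>\<omega>. a \<bullet> m \<partial>M)"
      by (rule integral_cong_AE[OF Ym _ ae]) simp
    ultimately show ?thesis by (simp add: P.prob_space)
  next
    case False
    then have pos: "0 < a \<bullet> (C *v a)" using psd by simp
    then have D: "distributed M lborel (\<lambda>\<omega>. a \<bullet> X \<omega>) (normal_density (a \<bullet> m) (sqrt (a \<bullet> (C *v a))))"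
      using G by (simp add: gaussian_vec_def)
    have s: "0 < sqrt (a \<bullet> (C *v a))" using pos by simp
    have "integrable M (\<lambda>\<omega>. a \<bullet> X \<omega>)"
      using distributed_integrable[OF D, of "\<lambda>x. x"] integrable_normal_moment_nz_1[OF s] by simp
    moreover have "(\<integral>\<omega>. a \<bullet> X \<omega> \<partial>M) = a \<bullet> m"
      by (rule P.normal_distributed_expectation[OF s D])
    ultimately show ?thesis by simp
  qed
qed

context mctx begin

lemma main_result:
  "(AE \<omega> in M. cond_exp_vec M (F 0) (X 0) \<omega> - Xh 0 \<omega> = x0 \<omega> - m0) \<and>
   (\<forall>k\<le>N. AE \<omega> in M. cond_exp_vec M (F (Suc k)) (X (Suc k)) \<omega> - Xh (Suc k) \<omega> =
      (1 - of_bool (delta k \<omega>)) *\<^sub>R (A *v (cond_exp_vec M (F k) (X k) \<omega> - Xh k \<omega>))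
      + (\<Sum>t \<in> {zeta tau (Suc k) \<omega>..zeta tau k \<omega>}. matpow A t *v w (k - t) \<omega>))"
proof (intro conjI allI impI)
  show "AE \<omega> in M. cond_exp_vec M (F 0) (X 0) \<omega> - Xh 0 \<omega> = x0 \<omega> - m0"
  proof -
    have "AE \<omega> in M. cond_exp_vec M (F 0) (X 0) \<omega> = xc 0 \<omega>" by (rule ce_vec) simp
    then show ?thesis by eventually_elim (simp add: xc0 Xh0)
  qed
  fix k assume k: "k \<le> N"
  have a1: "AE \<omega> in M. cond_exp_vec M (F k) (X k) \<omega> = xc k \<omega>" using ce_vec k by simp
  have a2: "AE \<omega> in M. cond_exp_vec M (F (Suc k)) (X (Suc k)) \<omega> = xc (Suc k) \<omega>" using ce_vec k by simp
  show "AE \<omega> in M. cond_exp_vec M (F (Suc k)) (X (Suc k)) \<omega> - Xh (Suc k) \<omega> =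
      (1 - of_bool (delta k \<omega>)) *\<^sub>R (A *v (cond_exp_vec M (F k) (X k) \<omega> - Xh k \<omega>))
      + (\<Sum>t \<in> {zeta tau (Suc k) \<omega>..zeta tau k \<omega>}. matpow A t *v w (k - t) \<omega>)"
    using a1 a2 by eventually_elim (simp add: det_main)
qed

end

theorem lemma5:
  fixes M :: "'w measure"
    and N :: nat
    and A :: "real^'n^'n" and B :: "real^'m^'n"
    and Q :: "real^'n^'n" and R :: "real^'m^'m"
    and W :: "real^'n^'n" and M0 :: "real^'n^'n" and m0 :: "real^'n"
    and x0 :: "'w \<Rightarrow> real^'n"
    and w :: "nat \<Rightarrow> 'w \<Rightarrow> real^'n"
    and tau :: "nat \<Rightarrow> 'w \<Rightarrow> nat"
    and delta :: "nat \<Rightarrow> 'w \<Rightarrow> bool"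
  defines "L \<equiv> lqr_gain A B Q R N"
  defines "x \<equiv> cl_state A B L m0 x0 w tau delta"
  defines "xhat \<equiv> cl_est A B L m0 x0 w tau delta"
  defines "u \<equiv> cl_input A B L m0 x0 w tau delta"
  defines "F \<equiv> trigger_info M x u tau delta"
  defines "etil \<equiv> (\<lambda>k \<omega>. cond_exp_vec M (F k) (x k) \<omega> - xhat k \<omega>)"
  assumes "prob_space M"
    and "psd_mat Q" and "pd_mat R" and "pd_mat W" and "psd_mat M0"
    and "gaussian_vec M x0 m0 M0"
    and "\<forall>k\<le>N. gaussian_vec M (w k) 0 W"
    and "\<forall>k\<le>N + 1. tau k \<in> measurable M (count_space UNIV)"
    and "\<forall>\<omega>\<in>space M. tau 0 \<omega> = 0"
    and "prob_space.indep_sets M (prim_events M x0 w tau)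
           ({PX0} \<union> PW ` {..N} \<union> PTau ` {..N + 1})"
    and "\<forall>k\<le>N. delta k \<in> measurable (F k) (count_space UNIV)"
  shows "(AE \<omega> in M. etil 0 \<omega> = x0 \<omega> - m0) \<and>
         (\<forall>k\<le>N. AE \<omega> in M.
            etil (Suc k) \<omega> =
              (1 - of_bool (delta k \<omega>)) *\<^sub>R (A *v etil k \<omega>)
              + (\<Sum>t \<in> {zeta tau (Suc k) \<omega>..zeta tau k \<omega>}. matpow A t *v w (k - t) \<omega>))"
proof -
  note as = assms(7-17)
  have psdM0: "0 \<le> a \<bullet> (M0 *v a)" for a using as(5) by (simp add: psd_mat_def)
  have psdW: "0 \<le> a \<bullet> (W *v a)" for a
    using as(4) by (cases "a = 0") (auto simp: pd_mat_def intro: less_imp_le)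
  have gw: "gaussian_vec M (w k) 0 W" if "k \<le> N" for k using as(7) that by simp
  interpret mctx A B L m0 x0 w tau delta M N
  proof (rule mctx.intro)
    show "prob_space M" by (rule as(1))
    show "x0 \<in> borel_measurable M" using as(6) by (simp add: gaussian_vec_def)
    show "w k \<in> borel_measurable M" if "k \<le> N" for k using gw[OF that] by (simp add: gaussian_vec_def)
    show "tau k \<in> measurable M (count_space UNIV)" if "k \<le> N + 1" for k using as(8) that by simp
    show "prob_space.indep_sets M (prim_events M x0 w tau) ({PX0} \<union> PW ` {..N} \<union> PTau ` {..N + 1})"
      by (rule as(10))
    show "delta k \<in> measurable (trigger_info M (cl_state A B L m0 x0 w tau delta) (cl_input A B L m0 x0 w tau delta) tau delta k) (count_space UNIV)"
      if "k \<le> N" for k using as(11) that by (simp add: F_def x_def u_def)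
    show "integrable M (\<lambda>\<omega>. x0 \<omega> $ i)" for i
    proof -
      have "(\<lambda>\<omega>. x0 \<omega> $ i) = (\<lambda>\<omega>. axis i 1 \<bullet> x0 \<omega>)"
        by (rule ext) (simp add: cart_eq_inner_axis inner_commute)
      then show ?thesis using gauss_facts[OF as(1) as(6) psdM0] by simp
    qed
    show "integrable M (\<lambda>\<omega>. a \<bullet> w k \<omega>)" if "k \<le> N" for k a
      using gauss_facts[OF as(1) gw[OF that] psdW] by simp
    show "(\<integral>\<omega>. a \<bullet> w k \<omega> \<partial>M) = 0" if "k \<le> N" for k a
      using gauss_facts[OF as(1) gw[OF that] psdW] by simp
  qed
  show ?thesis using main_result unfolding etil_def F_def x_def xhat_def u_def by simp
qed


end
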